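(* Let $(X_n)_{n\ge1}$ be a sequence of finite sets with $X_1=\emptyset$ and $|X_p|=p$ for every prime $p$, and for each $n\ge1$ let the cyclic group $\mathbb{Z}_n$ act on $X_n$ in such a way that $|X_n^i|=|X_{\gcd(s_n,i)}|$ for all $n,i\ge1$ (where $i$ acts through its residue modulo $n$). Then for every $n\ge1$ the triple $(X_n,\mathbb{Z}_n,S_n(q))$ exhibits the cyclic sieving phenomenon. The same holds with $s_n$ replaced by $g_n$ and $S_n(q)$ replaced by $G_n(q)$.
   Context: $\Phi_k(q)$ is the $k$-th cyclotomic polynomial. Set $s_1=g_1=0$, and for $n>1$ let $s_n$ be the smallest prime factor of $n$ and $g_n$ the greatest prime factor of $n$. Define $S_1(q)=G_1(q)=\Phi_1(q)=q-1$ and, for $n>1$, $S_n(q)=\Phi_{s_n}(q^{n/s_n})$, $G_n(q)=\Phi_{g_n}(q^{n/g_n})$. $X_n^i$ denotes the set of points of $X_n$ fixed by $i\in\mathbb{Z}_n$ (the additive group of integers modulo $n$). A triple $(X,\mathbb{Z}_n,f(q))$ with $f(q)\in\mathbb{Z}[q]$ exhibits the cyclic sieving phenomenon if $|X^i|=f(\omega_n^i)$ for all $i\in\mathbb{Z}_n$, where $\omega_n$ is a primitive $n$-th root of unity. *)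

theory Defs
  imports "HOL-Analysis.Analysis" "HOL-Computational_Algebra.Computational_Algebra"
begin

text \<open>The k-th cyclotomic polynomial, as the monic polynomial whose roots are
  exactly the primitive k-th roots of unity (complex coefficients; that they are
  integers is a fact, not part of the definition).\<close>
definition cyclotomic :: "nat \<Rightarrow> complex poly" where
  "cyclotomic k = (\<Prod>j\<in>{j\<in>{1..k}. coprime j k}. [:- cis (2 * pi * real j / real k), 1:])"

definition spf :: "nat \<Rightarrow> nat" where
  "spf n = (if n \<le> 1 then 0 else Min (prime_factors n))"

definition gpf :: "nat \<Rightarrow> nat" where
  "gpf n = (if n \<le> 1 then 0 else Max (prime_factors n))"

definition S_poly :: "nat \<Rightarrow> complex poly" where
  "S_poly n = (if n = 1 then cyclotomic 1
               else pcompose (cyclotomic (spf n)) (monom 1 (n div spf n)))"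

definition G_poly :: "nat \<Rightarrow> complex poly" where
  "G_poly n = (if n = 1 then cyclotomic 1
               else pcompose (cyclotomic (gpf n)) (monom 1 (n div gpf n)))"

definition cyclic_action :: "nat \<Rightarrow> 'a set \<Rightarrow> (nat \<Rightarrow> 'a \<Rightarrow> 'a) \<Rightarrow> bool" where
  "cyclic_action n X act \<longleftrightarrow>
     (\<forall>i<n. \<forall>x\<in>X. act i x \<in> X) \<and>
     (\<forall>x\<in>X. act 0 x = x) \<and>
     (\<forall>i<n. \<forall>j<n. \<forall>x\<in>X. act ((i + j) mod n) x = act i (act j x))"

definition fixed_points :: "'a set \<Rightarrow> (nat \<Rightarrow> 'a \<Rightarrow> 'a) \<Rightarrow> nat \<Rightarrow> 'a set" where
  "fixed_points X act i = {x\<in>X. act i x = x}"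

definition cyclic_sieving :: "'a set \<Rightarrow> nat \<Rightarrow> (nat \<Rightarrow> 'a \<Rightarrow> 'a) \<Rightarrow> complex poly \<Rightarrow> bool" where
  "cyclic_sieving X n act f \<longleftrightarrow>
     (\<forall>k. coeff f k \<in> \<int>) \<and>
     (\<forall>i<n. of_nat (card (fixed_points X act i)) = poly f (cis (2 * pi / real n) ^ i))"

end

theory Submission imports Defs begin

lemma prod_dvd_roots:
  fixes Q :: "complex poly"
  assumes "finite A" "\<forall>a\<in>A. poly Q a = 0"
  shows "(\<Prod>a\<in>A. [:-a,1:]) dvd Q"
  using assms
proof (induction A arbitrary: Q rule: finite_induct)
  case empty then show ?case by simp
next
  case (insert a A)
  then have "[:-a,1:] dvd Q" using poly_eq_0_iff_dvd by blast
  then obtain R where R: "Q = [:-a,1:] * R" by (elim dvdE)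
  have "\<forall>b\<in>A. poly R b = 0"
  proof
    fix b assume "b \<in> A"
    then have "b \<noteq> a" "poly Q b = 0" using insert by auto
    then show "poly R b = 0" using R by simp
  qed
  then have "(\<Prod>a\<in>A. [:-a,1:]) dvd R" using insert.IH by blast
  then have "[:-a,1:] * (\<Prod>a\<in>A. [:-a,1:]) dvd [:-a,1:] * R" by (rule mult_dvd_mono[OF dvd_refl])
  then show ?case using R insert(1,2) by simp
qed

lemma cis_exp: "cis (2 * pi * real j / real n) = exp (2 * of_real pi * \<i> * of_nat j / of_nat n)"
  by (simp add: cis_conv_exp mult_ac)

definition geo :: "nat \<Rightarrow> complex poly" where
  "geo p = (\<Sum>j<p. monom 1 j)"

lemma poly_geo: "poly (geo p) z = (\<Sum>j<p. z ^ j)"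
  by (simp add: geo_def poly_sum poly_monom)

lemma cyclotomic_prime:
  assumes p: "prime p"
  shows "cyclotomic p = geo p"
proof -
  define c where "c = (\<lambda>j::nat. cis (2 * pi * real j / real p))"
  define J where "J = {j\<in>{1..p}. coprime j p}"
  have p1: "p \<ge> 1" "p > 1" using prime_gt_1_nat[OF p] by auto
  have J: "J = {1..p-1}"
  proof -
    have "coprime j p \<longleftrightarrow> \<not> p dvd j" for j
      using p coprime_absorb_right[of p j] prime_imp_coprime[of p j] coprime_commute[of j p]
      by (cases "p dvd j") (auto simp: prime_gt_1_nat)
    moreover have "j \<in> {1..p} \<and> \<not> p dvd j \<longleftrightarrow> j \<in> {1..p-1}" for j
    proof
      assume "j \<in> {1..p} \<and> \<not> p dvd j" then have "j \<noteq> p" "j \<le> p" "j \<ge> 1" by auto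
      then show "j \<in> {1..p-1}" by simp
    next
      assume "j \<in> {1..p-1}" then have "1 \<le> j" "j < p" using p1 by auto
      then show "j \<in> {1..p} \<and> \<not> p dvd j" using nat_dvd_not_less by auto
    qed
    ultimately show ?thesis unfolding J_def by blast
  qed
  have injc: "inj_on c J"
  proof
    fix x y assume "x \<in> J" "y \<in> J" "c x = c y"
    then have "x mod p = y mod p" unfolding c_def cis_exp
      using complex_root_unity_eq[of p x y] p1 by simp
    then show "x = y" using \<open>x \<in> J\<close> \<open>y \<in> J\<close> J p1 by auto
  qed
  have cyc: "cyclotomic p = (\<Prod>z\<in>c ` J. [:-z,1:])"
    unfolding cyclotomic_def J_def[symmetric] c_def[symmetric]
    using prod.reindex[OF injc, of "\<lambda>z. [:-z,1:]"] by (simp add: c_def)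
  have roots: "\<forall>z\<in>c ` J. poly (geo p) z = 0"
  proof
    fix z assume "z \<in> c ` J"
    then obtain j where j: "j \<in> J" "z = c j" by auto
    have zp: "z ^ p = 1" using j p1 unfolding c_def cis_exp
      using complex_root_unity[of p j] by simp
    have "z \<noteq> 1" using j p1 J unfolding c_def cis_exp
      using complex_root_unity_eq_1[of p j] by (auto dest: dvd_imp_le)
    then show "poly (geo p) z = 0" using zp by (simp add: poly_geo geometric_sum)
  qed
  have dv: "cyclotomic p dvd geo p" unfolding cyc
    by (rule prod_dvd_roots) (use roots J in auto)
  have degc: "degree (cyclotomic p) = p - 1"
    unfolding cyclotomic_def J_def[symmetric] J
    by (subst degree_prod_sum_eq) auto
  have leadc: "lead_coeff (cyclotomic p) = 1"
    unfolding cyclotomic_def by (simp add: lead_coeff_prod)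
  have degg: "degree (geo p) \<le> p - 1"
    unfolding geo_def by (rule degree_sum_le) (auto intro: order_trans[OF degree_monom_le])
  have cg: "coeff (geo p) (p - 1) = 1"
    unfolding geo_def coeff_sum using p1 by (simp add: coeff_monom)
  then have g0: "geo p \<noteq> 0" by auto
  obtain R where R: "geo p = cyclotomic p * R" using dv by (elim dvdE)
  have c0: "cyclotomic p \<noteq> 0" using leadc by auto
  have R0: "R \<noteq> 0" using R g0 by auto
  have "degree R = 0" using degree_mult_eq[OF c0 R0] R degc degg by simp
  then obtain r where Rr: "R = [:r:]" by (metis degree_eq_zeroE)
  have "coeff (geo p) (p - 1) = r"
    using R Rr leadc degc by simp
  then have "r = 1" using cg by simp
  then show ?thesis using R Rr by simp
qed

lemma pcomp_geo: "pcompose (geo p) (monom 1 m) = (\<Sum>j<p. monom 1 (m*j))"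
proof -
  have "poly (pcompose (geo p) (monom 1 m)) = poly (\<Sum>j<p. monom 1 (m*j))"
    by (rule ext) (simp add: poly_pcompose poly_geo poly_sum poly_monom power_mult)
  then show ?thesis by (simp add: poly_eq_poly_eq_iff)
qed

lemma sieve_prime:
  fixes X :: "nat \<Rightarrow> 'a set"
  assumes p: "prime p" and pn: "p dvd n" and n: "n \<ge> 1"
    and X1: "card (X 1) = 0" and Xp: "card (X p) = p"
    and hyp: "\<forall>i. 1 \<le> i \<longrightarrow> i \<le> n \<longrightarrow>
              card (fixed_points (X n) act (i mod n)) = card (X (gcd p i))"
  shows "cyclic_sieving (X n) n act (pcompose (cyclotomic p) (monom 1 (n div p)))"
proof -
  define m where "m = n div p"
  have nm: "n = p * m" using pn m_def by auto
  have p1: "p > 1" using p prime_gt_1_nat by auto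
  have m0: "m > 0" using n nm by (cases m) auto
  have S: "pcompose (cyclotomic p) (monom 1 (n div p)) = (\<Sum>j<p. monom 1 (m*j))"
    using cyclotomic_prime[OF p] pcomp_geo m_def by simp
  have ints: "\<forall>k. coeff (\<Sum>j<p. monom (1::complex) (m*j)) k \<in> \<int>"
    by (auto simp: coeff_sum coeff_monom intro!: Ints_sum)
  have ev: "of_nat (card (fixed_points (X n) act i)) = poly (\<Sum>j<p. monom 1 (m*j)) (cis (2 * pi / real n) ^ i)"
    if i: "i < n" for i
  proof -
    define w where "w = cis (2 * pi * real i / real p)"
    have "(cis (2 * pi / real n) ^ i) ^ m = cis (2 * pi / real n) ^ (i * m)"
      by (simp add: power_mult)
    also have "\<dots> = cis (real (i*m) * (2 * pi / real n))" by (rule Complex.DeMoivre)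
    also have "\<dots> = w" unfolding w_def nm using m0 p1
      by (simp add: field_simps)
    finally have wq: "(cis (2 * pi / real n) ^ i) ^ m = w" .
    have pol: "poly (\<Sum>j<p. monom 1 (m*j)) (cis (2 * pi / real n) ^ i) = (\<Sum>j<p. w ^ j)"
      by (simp add: poly_sum poly_monom power_mult wq)
    have wp: "w ^ p = 1" unfolding w_def cis_exp using complex_root_unity[of p i] p1 by simp
    have w1: "w = 1 \<longleftrightarrow> p dvd i" unfolding w_def cis_exp using complex_root_unity_eq_1[of p i] p1 by simp
    show ?thesis
    proof (cases "p dvd i")
      case True
      have "card (fixed_points (X n) act i) = p"
      proof (cases "i = 0")
        case True
        then show ?thesis using hyp[rule_format, of n] n Xp pn by (simp add: gcd_nat.absorb1)
      next
        case False
        then show ?thesis using hyp[rule_format, of i] i Xp \<open>p dvd i\<close> by (simp add: gcd_nat.absorb1)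
      qed
      moreover have "(\<Sum>j<p. w ^ j) = of_nat p" using True w1 by simp
      ultimately show ?thesis using pol by simp
    next
      case False
      then have i0: "i \<ge> 1" by (cases i) auto
      have "gcd p i = 1" using prime_imp_coprime[OF p False] by simp
      then have "card (fixed_points (X n) act i) = 0" using hyp[rule_format, of i] i i0 X1 by simp
      moreover have "(\<Sum>j<p. w ^ j) = 0" using False w1 wp by (simp add: geometric_sum)
      ultimately show ?thesis using pol by simp
    qed
  qed
  show ?thesis unfolding cyclic_sieving_def S using ints ev by blast
qed

lemma cyc1: "cyclotomic 1 = [:-1,1:]"
proof -
  have "{j\<in>{1..1::nat}. coprime j 1} = {1}" by auto
  then show ?thesis unfolding cyclotomic_def by simp
qed

lemma sieve1:
  assumes "X 1 = {}"
  shows "cyclic_sieving (X 1) 1 act (cyclotomic 1)"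
proof -
  have "coeff [:-1,1::complex:] k \<in> \<int>" for k
    by (cases k) (auto simp: coeff_pCons split: nat.splits)
  then show ?thesis unfolding cyclic_sieving_def cyc1 using assms
    by (auto simp: fixed_points_def)
qed

lemma spf_prime: "n > 1 \<Longrightarrow> prime (spf n) \<and> spf n dvd n"
proof -
  assume n: "n > 1"
  then obtain q where "prime q" "q dvd n" using prime_factor_nat[of n] by auto
  then have "q \<in> prime_factors n" using n by (auto simp: in_prime_factors_iff)
  then have ne: "prime_factors n \<noteq> {}" by blast
  have "spf n \<in> prime_factors n" unfolding spf_def using n ne by (simp add: Min_in)
  then show ?thesis using n by (auto simp: in_prime_factors_iff)
qed

lemma gpf_prime: "n > 1 \<Longrightarrow> prime (gpf n) \<and> gpf n dvd n"
proof -
  assume n: "n > 1"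
  then obtain q where "prime q" "q dvd n" using prime_factor_nat[of n] by auto
  then have "q \<in> prime_factors n" using n by (auto simp: in_prime_factors_iff)
  then have ne: "prime_factors n \<noteq> {}" by blast
  have "gpf n \<in> prime_factors n" unfolding gpf_def using n ne by (simp add: Max_in)
  then show ?thesis using n by (auto simp: in_prime_factors_iff)
qed

theorem corollary3:
  fixes X :: "nat \<Rightarrow> 'a set" and act :: "nat \<Rightarrow> nat \<Rightarrow> 'a \<Rightarrow> 'a"
  assumes fin: "\<And>n. n \<ge> 1 \<Longrightarrow> finite (X n)"
    and X1: "X 1 = {}"
    and Xp: "\<And>p. prime p \<Longrightarrow> card (X p) = p"
    and act: "\<And>n. n \<ge> 1 \<Longrightarrow> cyclic_action n (X n) (act n)"
  shows "((\<forall>n i. 1 \<le> n \<longrightarrow> 1 \<le> i \<longrightarrow> i \<le> n \<longrightarrow>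
              card (fixed_points (X n) (act n) (i mod n)) = card (X (gcd (spf n) i)))
           \<longrightarrow> (\<forall>n\<ge>1. cyclic_sieving (X n) n (act n) (S_poly n)))
       \<and> ((\<forall>n i. 1 \<le> n \<longrightarrow> 1 \<le> i \<longrightarrow> i \<le> n \<longrightarrow>
              card (fixed_points (X n) (act n) (i mod n)) = card (X (gcd (gpf n) i)))
           \<longrightarrow> (\<forall>n\<ge>1. cyclic_sieving (X n) n (act n) (G_poly n)))"
proof (intro conjI impI allI)
  fix n :: nat
  assume H: "\<forall>n i. 1 \<le> n \<longrightarrow> 1 \<le> i \<longrightarrow> i \<le> n \<longrightarrow>
              card (fixed_points (X n) (act n) (i mod n)) = card (X (gcd (spf n) i))"
    and n: "1 \<le> n"
  show "cyclic_sieving (X n) n (act n) (S_poly n)"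
  proof (cases "n = 1")
    case True then show ?thesis using sieve1[of X, OF X1] by (simp add: S_poly_def)
  next
    case False
    then have "n > 1" using n by simp
    from spf_prime[OF this] have "prime (spf n)" "spf n dvd n" by auto
    moreover have "card (X 1) = 0" using X1 by simp
    moreover have "card (X (spf n)) = spf n" using Xp calculation by blast
    ultimately have "cyclic_sieving (X n) n (act n) (pcompose (cyclotomic (spf n)) (monom 1 (n div spf n)))"
      using sieve_prime[of "spf n" n X "act n"] H n by blast
    then show ?thesis using False unfolding S_poly_def by simp
  qed
next
  fix n :: nat
  assume H: "\<forall>n i. 1 \<le> n \<longrightarrow> 1 \<le> i \<longrightarrow> i \<le> n \<longrightarrow>
              card (fixed_points (X n) (act n) (i mod n)) = card (X (gcd (gpf n) i))"
    and n: "1 \<le> n"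
  show "cyclic_sieving (X n) n (act n) (G_poly n)"
  proof (cases "n = 1")
    case True then show ?thesis using sieve1[of X, OF X1] by (simp add: G_poly_def)
  next
    case False
    then have "n > 1" using n by simp
    from gpf_prime[OF this] have "prime (gpf n)" "gpf n dvd n" by auto
    moreover have "card (X 1) = 0" using X1 by simp
    moreover have "card (X (gpf n)) = gpf n" using Xp calculation by blast
    ultimately have "cyclic_sieving (X n) n (act n) (pcompose (cyclotomic (gpf n)) (monom 1 (n div gpf n)))"
      using sieve_prime[of "gpf n" n X "act n"] H n by blast
    then show ?thesis using False unfolding G_poly_def by simp
  qed
qed

end
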